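(* Let $X$ be an amoebot structure with $n$ amoebots satisfying the standing assumptions below, and let $S_1,S_2\subseteq X$ be non-empty. Suppose an $S_1$-shortest path forest and an $S_2$-shortest path forest are given (each amoebot knows whether it is in $S_1$, in $S_2$, and its parent in each forest). There is an algorithm in the reconfigurable circuit model (the merging algorithm) that computes an $(S_1\cup S_2)$-shortest path forest within $O(\log n)$ rounds.
   Context: Geometric amoebot model with reconfigurable circuits: $G_\Delta$ is the infinite regular triangular grid graph; an amoebot structure is a finite set $X$ of grid nodes, $n=|X|$, each occupied by an anonymous constant-memory amoebot, with $G_X=(X,E_X)$ the induced subgraph, assumed connected. Each edge of $G_X$ is replaced by a constant number of external links with pins at both endpoints (labeling agreed by neighbors); each amoebot partitions its pins into partition sets; circuits are connected components of the graph on all partition sets joined by external links. In synchronous rounds every amoebot may update its state, change its partition and beep on partition sets; beeps are received at the start of the next round by all partition sets of the same circuit (without sender identity or count). Standing assumptions: $X$ has no holes (the subgraph induced by $V_\Delta\setminus X$ is connected), amoebots share compass orientation and chirality, and a unique leader is known. An $S$-shortest path forest is a family of rooted trees $T_s=(V_s,E_s)$, $s\in S$, $V_s\subseteq X$, $E_s\subseteq E_X$, rooted at $s$, with pairwise disjoint $V_s$ covering $X$, such that for every $u\in V_s$ the tree path from $s$ to $u$ is a shortest path in $G_X$ and $s$ is a closest amoebot of $S$ to $u$; computing it means every amoebot not in $S$ knows its parent. *)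

theory Defs
  imports Complex_Main
begin

section \<open>Triangular grid (axial coordinates)\<close>

type_synonym node = "int \<times> int"

text \<open>Six compass directions 0..5 (shared orientation and chirality).\<close>
definition delta :: "nat \<Rightarrow> int \<times> int" where
  "delta d = (if d = 0 then (1,0) else if d = 1 then (0,1) else if d = 2 then (-1,1)
              else if d = 3 then (-1,0) else if d = 4 then (0,-1) else (1,-1))"

definition nbr :: "node \<Rightarrow> nat \<Rightarrow> node" where
  "nbr u d = (fst u + fst (delta d), snd u + snd (delta d))"

definition opp :: "nat \<Rightarrow> nat" where
  "opp d = (d + 3) mod 6"

definition grid_adj :: "node \<Rightarrow> node \<Rightarrow> bool" where
  "grid_adj u v \<longleftrightarrow> (\<exists>d<6. v = nbr u d)"

definition dir_of :: "node \<Rightarrow> node \<Rightarrow> nat" where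
  "dir_of u v = (SOME d. d < 6 \<and> nbr u d = v)"

definition walk_in :: "node set \<Rightarrow> node list \<Rightarrow> bool" where
  "walk_in A xs \<longleftrightarrow> xs \<noteq> [] \<and> set xs \<subseteq> A \<and>
     (\<forall>i. Suc i < length xs \<longrightarrow> grid_adj (xs ! i) (xs ! Suc i))"

definition connected_in :: "node set \<Rightarrow> bool" where
  "connected_in A \<longleftrightarrow> (\<forall>u\<in>A. \<forall>v\<in>A. \<exists>xs. walk_in A xs \<and> hd xs = u \<and> last xs = v)"

definition dist_in :: "node set \<Rightarrow> node \<Rightarrow> node \<Rightarrow> nat" where
  "dist_in A u v = (LEAST k. \<exists>xs. walk_in A xs \<and> hd xs = u \<and> last xs = v \<and> length xs = Suc k)"

definition amoebot_structure :: "node set \<Rightarrow> bool" where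
  "amoebot_structure X \<longleftrightarrow> finite X \<and> X \<noteq> {} \<and> connected_in X"

definition no_holes :: "node set \<Rightarrow> bool" where
  "no_holes X \<longleftrightarrow> connected_in (UNIV - X)"

definition is_SPF :: "node set \<Rightarrow> node set \<Rightarrow> (node \<Rightarrow> node) \<Rightarrow> bool" where
  "is_SPF X S par \<longleftrightarrow> (\<forall>u\<in>X - S. par u \<in> X \<and> grid_adj u (par u) \<and>
     (\<exists>k s. s \<in> S \<and> (par ^^ k) u = s \<and> (\<forall>j<k. (par ^^ j) u \<notin> S) \<and>
            k = dist_in X u s \<and> (\<forall>s'\<in>S. dist_in X u s \<le> dist_in X u s')))"

text \<open>Local input of an amoebot: occupied neighbour directions, membership in S1, S2,
  parent direction in the S1-forest (None if in S1), in the S2-forest, and leader flag.\<close>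
type_synonym local_inp = "nat set \<times> bool \<times> bool \<times> nat option \<times> nat option \<times> bool"

text \<open>An algorithm: finite state set Q (constant memory), number of external links per edge,
  initial state from local input, pin partition (pin (d,i) mapped to the label of its
  partition set), set of partition-set labels beeped on, transition on received labels,
  termination flag and output parent direction. All amoebots run the same algorithm
  (anonymous).\<close>
record alg =
  Q :: "nat set"
  npins :: nat
  init :: "local_inp \<Rightarrow> nat"
  part :: "nat \<Rightarrow> nat \<times> nat \<Rightarrow> nat"
  beep :: "nat \<Rightarrow> nat set"
  trans :: "nat \<Rightarrow> nat set \<Rightarrow> nat"
  final :: "nat \<Rightarrow> bool"
  outdir :: "nat \<Rightarrow> nat"

definition valid_alg :: "alg \<Rightarrow> bool" where
  "valid_alg A \<longleftrightarrow> finite (Q A) \<and> npins A \<ge> 1 \<and> (\<forall>x. init A x \<in> Q A) \<and>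
     (\<forall>q\<in>Q A. \<forall>R. trans A q R \<in> Q A)"

definition valid_pin :: "alg \<Rightarrow> node set \<Rightarrow> node \<Rightarrow> nat \<times> nat \<Rightarrow> bool" where
  "valid_pin A X u p \<longleftrightarrow> u \<in> X \<and> fst p < 6 \<and> nbr u (fst p) \<in> X \<and> snd p < npins A"

text \<open>Pins are joined if they lie in the same partition set of the same amoebot, or if they
  are the two endpoints of the same external link (link i of edge in direction d of u
  is link i of edge in direction opp d of the neighbour).\<close>
definition pin_step :: "alg \<Rightarrow> node set \<Rightarrow> (node \<Rightarrow> nat) \<Rightarrow>
    node \<times> (nat \<times> nat) \<Rightarrow> node \<times> (nat \<times> nat) \<Rightarrow> bool" where
  "pin_step A X \<sigma> a b \<longleftrightarrow> valid_pin A X (fst a) (snd a) \<and> valid_pin A X (fst b) (snd b) \<and>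
     ((fst a = fst b \<and> part A (\<sigma> (fst a)) (snd a) = part A (\<sigma> (fst a)) (snd b)) \<or>
      (fst b = nbr (fst a) (fst (snd a)) \<and> fst (snd b) = opp (fst (snd a)) \<and> snd (snd b) = snd (snd a)))"

definition received :: "alg \<Rightarrow> node set \<Rightarrow> (node \<Rightarrow> nat) \<Rightarrow> node \<Rightarrow> nat set" where
  "received A X \<sigma> u = {l. \<exists>p. valid_pin A X u p \<and> part A (\<sigma> u) p = l \<and>
      (\<exists>v q. (pin_step A X \<sigma>)\<^sup>*\<^sup>* (u, p) (v, q) \<and> part A (\<sigma> v) q \<in> beep A (\<sigma> v))}"

primrec run :: "alg \<Rightarrow> node set \<Rightarrow> (node \<Rightarrow> local_inp) \<Rightarrow> nat \<Rightarrow> node \<Rightarrow> nat" where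
  "run A X inp 0 = (\<lambda>u. init A (inp u))"
| "run A X inp (Suc t) = (\<lambda>u. trans A (run A X inp t u) (received A X (run A X inp t) u))"

definition local_input :: "node set \<Rightarrow> node set \<Rightarrow> node set \<Rightarrow> (node \<Rightarrow> node) \<Rightarrow>
    (node \<Rightarrow> node) \<Rightarrow> node \<Rightarrow> node \<Rightarrow> local_inp" where
  "local_input X S1 S2 p1 p2 ldr u =
     ({d. d < 6 \<and> nbr u d \<in> X}, u \<in> S1, u \<in> S2,
      (if u \<in> S1 then None else Some (dir_of u (p1 u))),
      (if u \<in> S2 then None else Some (dir_of u (p2 u))),
      u = ldr)"

end

theory Submission
  imports Defs "HOL-Library.Countable"
begin


lemma walk_single: "u \<in> A \<Longrightarrow> walk_in A [u]"
  by (simp add: walk_in_def)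

lemma walk_Cons: "walk_in A ys \<Longrightarrow> u \<in> A \<Longrightarrow> grid_adj u (hd ys) \<Longrightarrow> walk_in A (u # ys)"
  unfolding walk_in_def
  apply (auto simp: nth_Cons split: nat.splits)
  by (metis hd_conv_nth length_greater_0_conv)

lemma walk_Cons2: "walk_in A (x # y # ys) \<Longrightarrow> x \<in> A \<and> grid_adj x y \<and> walk_in A (y # ys)"
proof -
  assume w: "walk_in A (x # y # ys)"
  have h: "set (x # y # ys) \<subseteq> A" "\<And>i. Suc i < length (x # y # ys) \<Longrightarrow> grid_adj ((x # y # ys) ! i) ((x # y # ys) ! Suc i)"
    using w unfolding walk_in_def by auto
  have "grid_adj x y" using h(2)[of 0] by simp
  moreover have "walk_in A (y # ys)" unfolding walk_in_def
    using h(1) h(2)[of "Suc _"] by auto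
  ultimately show ?thesis using h(1) by auto
qed

lemma dist_le: "walk_in A xs \<Longrightarrow> hd xs = u \<Longrightarrow> last xs = v \<Longrightarrow> dist_in A u v \<le> length xs - 1"
  unfolding dist_in_def
  apply (rule Least_le)
  apply (rule exI[of _ xs])
  by (auto simp: walk_in_def)

lemma dist_walk: "connected_in A \<Longrightarrow> u \<in> A \<Longrightarrow> v \<in> A \<Longrightarrow>
   \<exists>xs. walk_in A xs \<and> hd xs = u \<and> last xs = v \<and> length xs = Suc (dist_in A u v)"
proof -
  assume c: "connected_in A" and uv: "u \<in> A" "v \<in> A"
  then obtain xs where xs: "walk_in A xs" "hd xs = u" "last xs = v" unfolding connected_in_def by blast
  then have "\<exists>k. \<exists>xs. walk_in A xs \<and> hd xs = u \<and> last xs = v \<and> length xs = Suc k"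
    by (intro exI[of _ "length xs - 1"] exI[of _ xs]) (auto simp: walk_in_def)
  then show ?thesis unfolding dist_in_def by (rule LeastI_ex)
qed

lemma dist_self: "u \<in> A \<Longrightarrow> dist_in A u u = 0"
  using dist_le[OF walk_single, of u A u u] by simp

lemma dist_tri: "connected_in A \<Longrightarrow> u \<in> A \<Longrightarrow> v \<in> A \<Longrightarrow> s \<in> A \<Longrightarrow> grid_adj u v \<Longrightarrow>
   dist_in A u s \<le> Suc (dist_in A v s)"
proof -
  assume c: "connected_in A" and h: "u \<in> A" "v \<in> A" "s \<in> A" "grid_adj u v"
  obtain ys where ys: "walk_in A ys" "hd ys = v" "last ys = s" "length ys = Suc (dist_in A v s)"
    using dist_walk[OF c h(2,3)] by blast
  have "walk_in A (u # ys)" using walk_Cons[OF ys(1) h(1)] ys(2) h(4) by simp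
  moreover have "ys \<noteq> []" using ys(4) by auto
  ultimately show ?thesis using dist_le[of A "u # ys" u s] ys by simp
qed

definition dep :: "node set \<Rightarrow> (node \<Rightarrow> node) \<Rightarrow> node \<Rightarrow> nat" where
  "dep S p u = (LEAST k. (p ^^ k) u \<in> S)"

lemma dep_S: "u \<in> S \<Longrightarrow> dep S p u = 0"
  unfolding dep_def by (rule Least_equality) auto

lemma SPF_dep:
  assumes "is_SPF X S p" "u \<in> X" "u \<notin> S"
  shows "p u \<in> X \<and> grid_adj u (p u) \<and> (p ^^ dep S p u) u \<in> S \<and> (\<forall>j<dep S p u. (p ^^ j) u \<notin> S) \<and>
     dep S p u = dist_in X u ((p ^^ dep S p u) u) \<and>
     (\<forall>s'\<in>S. dist_in X u ((p ^^ dep S p u) u) \<le> dist_in X u s')"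
proof -
  obtain k s where ks: "s \<in> S" "(p ^^ k) u = s" "\<forall>j<k. (p ^^ j) u \<notin> S" "k = dist_in X u s"
    "\<forall>s'\<in>S. dist_in X u s \<le> dist_in X u s'" and pu: "p u \<in> X" "grid_adj u (p u)"
    using assms unfolding is_SPF_def by blast
  have "dep S p u = k" unfolding dep_def
    apply (rule Least_equality)
    using ks apply simp
    using ks(3) not_le by blast
  then show ?thesis using ks pu by simp
qed

lemma dep_pos: "is_SPF X S p \<Longrightarrow> u \<in> X \<Longrightarrow> u \<notin> S \<Longrightarrow> dep S p u \<ge> 1"
  using SPF_dep[of X S p u] by (cases "dep S p u") auto

lemma dep_par:
  assumes "is_SPF X S p" "u \<in> X" "u \<notin> S"
  shows "dep S p (p u) = dep S p u - 1"
proof -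
  have h: "(p ^^ dep S p u) u \<in> S" "\<forall>j<dep S p u. (p ^^ j) u \<notin> S"
    using SPF_dep[OF assms] by auto
  have pos: "dep S p u \<ge> 1" using dep_pos[OF assms] .
  show ?thesis unfolding dep_def[of S p "p u"]
  proof (rule Least_equality)
    show "(p ^^ (dep S p u - 1)) (p u) \<in> S" using h(1) pos
      by (metis funpow_Suc_right o_apply Suc_diff_1 less_le_trans zero_less_one)
  next
    fix y assume "(p ^^ y) (p u) \<in> S"
    then have "(p ^^ Suc y) u \<in> S" by (simp add: funpow_Suc_right del: funpow.simps)
    then show "dep S p u - 1 \<le> y" using h(2) by (metis Suc_pred' not_less_eq_eq pos less_le_trans zero_less_one Suc_le_mono less_Suc_eq_le not_le)
  qed
qed



lemma dep_zero_iff: "is_SPF X S p \<Longrightarrow> u \<in> X \<Longrightarrow> dep S p u = 0 \<longleftrightarrow> u \<in> S"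
proof (cases "u \<in> S")
  case True then show ?thesis by (simp add: dep_S)
next
  case False
  assume "is_SPF X S p" "u \<in> X"
  then show ?thesis using dep_pos[of X S p u] False by simp
qed

lemma dep_iter:
  assumes "is_SPF X S p" "u \<in> X"
  shows "j \<le> dep S p u \<Longrightarrow> (p ^^ j) u \<in> X \<and> dep S p ((p ^^ j) u) = dep S p u - j"
proof (induction j)
  case 0 then show ?case using assms by simp
next
  case (Suc j)
  then have IH: "(p ^^ j) u \<in> X" "dep S p ((p ^^ j) u) = dep S p u - j" by auto
  have "(p ^^ j) u \<notin> S" using IH Suc.prems dep_S[of "(p ^^ j) u" S p] by auto
  then show ?case using SPF_dep[OF assms(1) IH(1)] dep_par[OF assms(1) IH(1)] IH by simp
qed

lemma dep_lt_card:
  assumes "is_SPF X S p" "u \<in> X" "finite X"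
  shows "dep S p u < card X"
proof -
  let ?f = "\<lambda>j. (p ^^ j) u"
  have inj: "inj_on ?f {0..dep S p u}"
  proof (rule inj_onI)
    fix i j assume "i \<in> {0..dep S p u}" "j \<in> {0..dep S p u}" "?f i = ?f j"
    then show "i = j" using dep_iter[OF assms(1,2), of i] dep_iter[OF assms(1,2), of j] by auto
  qed
  have sub: "?f ` {0..dep S p u} \<subseteq> X" using dep_iter[OF assms(1,2)] by auto
  have "card {0..dep S p u} \<le> card X"
    using card_inj_on_le[OF inj sub assms(3)] .
  then show ?thesis by simp
qed

lemma dep_exists:
  assumes "is_SPF X S p" "u \<in> X"
  shows "\<exists>s\<in>S. dist_in X u s = dep S p u"
proof (cases "u \<in> S")
  case True then show ?thesis using dist_self[OF assms(2)] dep_S by metis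
next
  case False then show ?thesis using SPF_dep[OF assms False] by metis
qed

lemma dep_le_dist:
  assumes "is_SPF X S p" "u \<in> X" "s \<in> S"
  shows "dep S p u \<le> dist_in X u s"
proof (cases "u \<in> S")
  case True then show ?thesis using dep_S by simp
next
  case False then show ?thesis using SPF_dep[OF assms(1,2) False] assms(3) by metis
qed

lemma dep_tri:
  assumes "is_SPF X S p" "connected_in X" "S \<subseteq> X" "u \<in> X" "v \<in> X" "grid_adj u v"
  shows "dep S p u \<le> Suc (dep S p v)"
proof -
  obtain s where s: "s \<in> S" "dist_in X v s = dep S p v" using dep_exists[OF assms(1,5)] by blast
  have "dep S p u \<le> dist_in X u s" using dep_le_dist[OF assms(1,4) s(1)] .
  also have "\<dots> \<le> Suc (dist_in X v s)" using dist_tri[OF assms(2,4,5) _ assms(6)] s(1) assms(3) by blast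
  finally show ?thesis using s by simp
qed

definition mpar :: "node set \<Rightarrow> (node \<Rightarrow> node) \<Rightarrow> node set \<Rightarrow> (node \<Rightarrow> node) \<Rightarrow> node \<Rightarrow> node" where
  "mpar S1 p1 S2 p2 u = (if dep S1 p1 u \<le> dep S2 p2 u then p1 u else p2 u)"

definition mdep :: "node set \<Rightarrow> (node \<Rightarrow> node) \<Rightarrow> node set \<Rightarrow> (node \<Rightarrow> node) \<Rightarrow> node \<Rightarrow> nat" where
  "mdep S1 p1 S2 p2 u = min (dep S1 p1 u) (dep S2 p2 u)"

locale two_forests =
  fixes X S1 S2 p1 p2
  assumes conn: "connected_in X" and fin: "finite X"
    and sub1: "S1 \<subseteq> X" and sub2: "S2 \<subseteq> X"
    and spf1: "is_SPF X S1 p1" and spf2: "is_SPF X S2 p2"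
begin

abbreviation "q \<equiv> mpar S1 p1 S2 p2"
abbreviation "D \<equiv> mdep S1 p1 S2 p2"

lemma D_zero: "u \<in> X \<Longrightarrow> D u = 0 \<longleftrightarrow> u \<in> S1 \<union> S2"
proof -
  assume u: "u \<in> X"
  have "D u = 0 \<longleftrightarrow> dep S1 p1 u = 0 \<or> dep S2 p2 u = 0" unfolding mdep_def by (auto simp: min_def)
  then show ?thesis using dep_zero_iff[OF spf1 u] dep_zero_iff[OF spf2 u] by simp
qed

lemma q_step:
  assumes "u \<in> X" "u \<notin> S1 \<union> S2"
  shows "q u \<in> X \<and> grid_adj u (q u) \<and> D (q u) = D u - 1"
proof -
  have a1: "p1 u \<in> X" "grid_adj u (p1 u)" "dep S1 p1 (p1 u) = dep S1 p1 u - 1" "dep S1 p1 u \<ge> 1"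
    using SPF_dep[OF spf1 assms(1)] dep_par[OF spf1 assms(1)] dep_pos[OF spf1 assms(1)] assms(2) by auto
  have a2: "p2 u \<in> X" "grid_adj u (p2 u)" "dep S2 p2 (p2 u) = dep S2 p2 u - 1" "dep S2 p2 u \<ge> 1"
    using SPF_dep[OF spf2 assms(1)] dep_par[OF spf2 assms(1)] dep_pos[OF spf2 assms(1)] assms(2) by auto
  have t1: "dep S2 p2 u \<le> Suc (dep S2 p2 (p1 u))" using dep_tri[OF spf2 conn sub2 assms(1) a1(1,2)] .
  have t2: "dep S1 p1 u \<le> Suc (dep S1 p1 (p2 u))" using dep_tri[OF spf1 conn sub1 assms(1) a2(1,2)] .
  show ?thesis
  proof (cases "dep S1 p1 u \<le> dep S2 p2 u")
    case True
    then show ?thesis using a1 t1 unfolding mpar_def mdep_def by auto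
  next
    case False
    then show ?thesis using a2 t2 unfolding mpar_def mdep_def by auto
  qed
qed

lemma q_iter: "u \<in> X \<Longrightarrow> j \<le> D u \<Longrightarrow> (q ^^ j) u \<in> X \<and> D ((q ^^ j) u) = D u - j"
proof (induction j)
  case 0 then show ?case by simp
next
  case (Suc j)
  then have IH: "(q ^^ j) u \<in> X" "D ((q ^^ j) u) = D u - j" by auto
  have "(q ^^ j) u \<notin> S1 \<union> S2" using IH Suc.prems D_zero[OF IH(1)] by auto
  then show ?case using q_step[OF IH(1)] IH by simp
qed

lemma chain_walk: "u \<in> X \<Longrightarrow> k \<le> D u \<Longrightarrow> walk_in X (map (\<lambda>j. (q ^^ j) u) [0..<Suc k])"
  unfolding walk_in_def
proof (intro conjI allI impI)
  assume u: "u \<in> X" and k: "k \<le> D u"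
  show "map (\<lambda>j. (q ^^ j) u) [0..<Suc k] \<noteq> []" by simp
  show "set (map (\<lambda>j. (q ^^ j) u) [0..<Suc k]) \<subseteq> X" using q_iter[OF u] k by auto
  fix i assume i: "Suc i < length (map (\<lambda>j. (q ^^ j) u) [0..<Suc k])"
  then have i': "i < k" by simp
  have A: "(q ^^ i) u \<in> X" "D ((q ^^ i) u) = D u - i" using q_iter[OF u, of i] i' k by auto
  have "(q ^^ i) u \<notin> S1 \<union> S2" using A D_zero[OF A(1)] i' k by auto
  then have "grid_adj ((q ^^ i) u) (q ((q ^^ i) u))" using q_step[OF A(1)] by auto
  then show "grid_adj (map (\<lambda>j. (q ^^ j) u) [0..<Suc k] ! i) (map (\<lambda>j. (q ^^ j) u) [0..<Suc k] ! Suc i)"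
    using i' by (simp del: upt_Suc add: nth_map_upt)
qed

lemma merged_SPF: "is_SPF X (S1 \<union> S2) q"
  unfolding is_SPF_def
proof (intro ballI conjI)
  fix u assume u: "u \<in> X - (S1 \<union> S2)"
  show "q u \<in> X" "grid_adj u (q u)" using q_step u by auto
  let ?k = "D u" let ?s = "(q ^^ ?k) u"
  have sX: "?s \<in> X" "D ?s = 0" using q_iter[of u ?k] u by auto
  have sS: "?s \<in> S1 \<union> S2" using D_zero[OF sX(1)] sX(2) by simp
  have notS: "\<forall>j<?k. (q ^^ j) u \<notin> S1 \<union> S2"
  proof (intro allI impI)
    fix j assume "j < ?k"
    then show "(q ^^ j) u \<notin> S1 \<union> S2" using q_iter[of u j] u D_zero[of "(q ^^ j) u"] by auto
  qed
  have w: "walk_in X (map (\<lambda>j. (q ^^ j) u) [0..<Suc ?k])" using chain_walk u by auto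
  have d1: "dist_in X u ?s \<le> ?k"
    using dist_le[OF w] by (simp add: hd_map last_map del: upt_Suc)
  have lowb: "\<forall>s'\<in>S1 \<union> S2. ?k \<le> dist_in X u s'"
  proof
    fix s' assume "s' \<in> S1 \<union> S2"
    then show "?k \<le> dist_in X u s'"
      using dep_le_dist[OF spf1, of u s'] dep_le_dist[OF spf2, of u s'] u unfolding mdep_def by auto
  qed
  have eq: "dist_in X u ?s = ?k" using d1 lowb sS by (meson le_antisym)
  show "\<exists>k s. s \<in> S1 \<union> S2 \<and> (q ^^ k) u = s \<and> (\<forall>j<k. (q ^^ j) u \<notin> S1 \<union> S2) \<and>
          k = dist_in X u s \<and> (\<forall>s'\<in>S1 \<union> S2. dist_in X u s \<le> dist_in X u s')"
    apply (rule exI[of _ ?k], rule exI[of _ ?s])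
    using sS notS eq lowb by auto
qed

end

lemma SPF_cong:
  assumes "is_SPF X S q" "\<And>u. u \<in> X \<Longrightarrow> u \<notin> S \<Longrightarrow> par u = q u"
  shows "is_SPF X S par"
  unfolding is_SPF_def
proof (intro ballI conjI)
  fix u assume u: "u \<in> X - S"
  from assms(1) u obtain k s where ks: "s \<in> S" "(q ^^ k) u = s" "\<forall>j<k. (q ^^ j) u \<notin> S" "k = dist_in X u s"
    "\<forall>s'\<in>S. dist_in X u s \<le> dist_in X u s'" and qu: "q u \<in> X" "grid_adj u (q u)"
    unfolding is_SPF_def by blast
  show "par u \<in> X" "grid_adj u (par u)" using qu assms(2) u by auto
  have it: "j \<le> k \<Longrightarrow> (par ^^ j) u = (q ^^ j) u \<and> (q ^^ j) u \<in> X" for j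
  proof (induction j)
    case 0 then show ?case using u by simp
  next
    case (Suc j)
    then have IH: "(par ^^ j) u = (q ^^ j) u" "(q ^^ j) u \<in> X" by auto
    have nS: "(q ^^ j) u \<notin> S" using ks(3) Suc.prems by auto
    have "q ((q ^^ j) u) \<in> X" using assms(1) IH(2) nS unfolding is_SPF_def by blast
    then show ?case using IH assms(2)[OF IH(2) nS] by simp
  qed
  show "\<exists>k s. s \<in> S \<and> (par ^^ k) u = s \<and> (\<forall>j<k. (par ^^ j) u \<notin> S) \<and> k = dist_in X u s \<and>
            (\<forall>s'\<in>S. dist_in X u s \<le> dist_in X u s')"
    apply (rule exI[of _ k], rule exI[of _ s])
    using ks it by auto
qed



lemma less6: "(d::nat) < 6 \<Longrightarrow> d = 0 \<or> d = 1 \<or> d = 2 \<or> d = 3 \<or> d = 4 \<or> d = 5"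
  by linarith

lemma nbr_opp: "d < 6 \<Longrightarrow> nbr (nbr u d) (opp d) = u"
  apply (drule less6)
  apply (elim disjE)
  by (simp_all add: nbr_def opp_def delta_def)

lemma opp_lt: "opp d < 6" unfolding opp_def by simp

definition cb :: "nat \<Rightarrow> nat" where "cb e = (if e < 3 then 0 else 1)"

lemma cb_opp: "d < 6 \<Longrightarrow> cb (opp d) = 1 - cb d"
  apply (drule less6)
  apply (elim disjE)
  by (simp_all add: cb_def opp_def)

lemma cb_le: "cb e < 2" unfolding cb_def by simp

lemma dir_of_ok: "grid_adj u v \<Longrightarrow> dir_of u v < 6 \<and> nbr u (dir_of u v) = v"
  unfolding grid_adj_def dir_of_def by (rule someI_ex) blast

lemma divq: "(b::nat) > 0 \<Longrightarrow> r < b \<Longrightarrow> (b * q + r) div b = q"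
  by simp

lemma parity_gen: "(m::nat) > 0 \<Longrightarrow> d \<ge> 1 \<Longrightarrow> odd (d div m) = ((m dvd d) \<noteq> odd ((d - 1) div m))"
proof -
  assume d: "d \<ge> 1" and m: "m > 0"
  define k where "k = d div m"
  define r where "r = d mod m"
  have dk: "d = m * k + r" unfolding k_def r_def by simp
  have rm: "r < m" unfolding r_def using m by simp
  show ?thesis
  proof (cases "r = 0")
    case True
    then have k1: "k \<ge> 1" using dk d by (cases k) auto
    have "d - 1 = m * (k - 1) + (m - 1)" using dk True k1 m
      by (cases k) (auto simp: algebra_simps)
    then have "(d - 1) div m = k - 1" using divq[OF m, of "m - 1" "k - 1"] m by simp
    moreover have "m dvd d" using dk True by simp
    moreover have "d div m = k" unfolding k_def ..
    ultimately show ?thesis using k1 by (cases k) auto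
  next
    case False
    have "d - 1 = m * k + (r - 1)" using dk False by simp
    then have "(d - 1) div m = k" using divq[OF m, of "r - 1" k] rm by simp
    moreover have "\<not> m dvd d" using False r_def by (simp add: dvd_eq_mod_eq_0)
    ultimately show ?thesis unfolding k_def by simp
  qed
qed

lemma parity_step: "(d::nat) \<ge> 1 \<Longrightarrow> odd (d div 2^t) = ((2^t dvd d) \<noteq> odd ((d - 1) div 2^t))"
  by (rule parity_gen) simp_all

datatype st = St (sr1: bool) (sr2: bool) (spd1: nat) (spd2: nat) (sact1: bool) (sact2: bool) (sle: bool) (sdone: bool)

instance st :: countable by countable_datatype

definition rt :: "nat \<Rightarrow> st \<Rightarrow> bool" where "rt f s = (if f = 0 then sr1 s else sr2 s)"
definition pdf :: "nat \<Rightarrow> st \<Rightarrow> nat" where "pdf f s = (if f = 0 then spd1 s else spd2 s)"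
definition actf :: "nat \<Rightarrow> st \<Rightarrow> bool" where "actf f s = (if f = 0 then sact1 s else sact2 s)"

fun lab :: "st \<Rightarrow> nat \<times> nat \<Rightarrow> nat" where
  "lab s (e, i) = (if i < 8 then
      (if i mod 2 = cb e then 1 + 2 * (i div 4) + (i mod 4) div 2
       else if \<not> rt (i div 4) s \<and> e = pdf (i div 4) s
         then 1 + 2 * (i div 4) + (if actf (i div 4) s then 1 - (i mod 4) div 2 else (i mod 4) div 2)
       else 10 + 10 * e + i)
     else if i = 8 then 5 else 10 + 10 * e + i)"

definition beeps :: "st \<Rightarrow> nat set" where
  "beeps s = {l. (l = 1 \<and> sr1 s) \<or> (l = 3 \<and> sr2 s) \<or>
      (l = 5 \<and> \<not> sdone s \<and> ((\<not> sr1 s \<and> sact1 s) \<or> (\<not> sr2 s \<and> sact2 s)))}"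

definition step :: "st \<Rightarrow> nat set \<Rightarrow> st" where
  "step s R = (if sdone s then s
     else if 5 \<notin> R then St (sr1 s) (sr2 s) (spd1 s) (spd2 s) (sact1 s) (sact2 s) (sle s) True
     else (let b1 = (\<not> sr1 s \<and> 1 \<notin> R); b2 = (\<not> sr2 s \<and> 3 \<notin> R) in
       St (sr1 s) (sr2 s) (spd1 s) (spd2 s) (sact1 s \<and> \<not> b1) (sact2 s \<and> \<not> b2)
          (if b1 = b2 then sle s else b2) False))"

definition clampd :: "nat option \<Rightarrow> nat" where
  "clampd o' = (case o' of None \<Rightarrow> 0 | Some d \<Rightarrow> if d < 6 then d else 0)"

fun initst :: "local_inp \<Rightarrow> st" where
  "initst (nb, i1, i2, o1, o2, ld) = St i1 i2 (clampd o1) (clampd o2) True True True False"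

definition goodst :: "st set" where "goodst = {s. spd1 s < 6 \<and> spd2 s < 6}"

definition theAlg :: alg where
  "theAlg = \<lparr> Q = to_nat ` goodst, npins = 9, init = (\<lambda>x. to_nat (initst x)),
     part = (\<lambda>q p. lab (from_nat q) p), beep = (\<lambda>q. beeps (from_nat q)),
     trans = (\<lambda>q R. to_nat (step (from_nat q) R)), final = (\<lambda>q. sdone (from_nat q)),
     outdir = (\<lambda>q. if sle (from_nat q) then spd1 (from_nat q) else spd2 (from_nat q)) \<rparr>"

lemma goodst_finite: "finite goodst"
proof -
  let ?g = "\<lambda>(a, b, c, d, e, f, g, h). St a b c d e f g h"
  have "goodst \<subseteq> ?g ` (UNIV \<times> UNIV \<times> {..<6} \<times> {..<6} \<times> UNIV \<times> UNIV \<times> UNIV \<times> UNIV)"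
  proof
    fix s assume "s \<in> goodst"
    then show "s \<in> ?g ` (UNIV \<times> UNIV \<times> {..<6} \<times> {..<6} \<times> UNIV \<times> UNIV \<times> UNIV \<times> UNIV)"
      unfolding goodst_def
      by (cases s) (auto intro!: image_eqI[where x="(sr1 s, sr2 s, spd1 s, spd2 s, sact1 s, sact2 s, sle s, sdone s)"])
  qed
  moreover have "finite (?g ` (UNIV \<times> UNIV \<times> {..<6::nat} \<times> {..<6::nat} \<times> (UNIV::bool set) \<times> (UNIV::bool set) \<times> (UNIV::bool set) \<times> (UNIV::bool set)))"
    by (intro finite_imageI finite_cartesian_product) auto
  ultimately show ?thesis by (rule finite_subset)
qed

lemma valid_theAlg: "valid_alg theAlg"
proof -
  have f: "finite (to_nat ` goodst :: nat set)" using goodst_finite by simp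
  have i: "\<And>x. initst x \<in> goodst"
    by (case_tac x) (auto simp: goodst_def clampd_def split: option.splits)
  have t: "\<And>q R. q \<in> goodst \<Longrightarrow> step q R \<in> goodst"
    unfolding goodst_def step_def by (auto simp: Let_def)
  show ?thesis unfolding valid_alg_def theAlg_def using f i t by auto
qed



lemma less8: "(i::nat) < 8 \<Longrightarrow> i = 0 \<or> i = 1 \<or> i = 2 \<or> i = 3 \<or> i = 4 \<or> i = 5 \<or> i = 6 \<or> i = 7"
  by linarith

lemma valid_pin_alg: "valid_pin theAlg X u p \<longleftrightarrow> u \<in> X \<and> fst p < 6 \<and> nbr u (fst p) \<in> X \<and> snd p < 9"
  unfolding valid_pin_def theAlg_def by simp

lemma part_alg: "part theAlg q p = lab (from_nat q) p"
  unfolding theAlg_def by simp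

lemma beep_alg: "beep theAlg q = beeps (from_nat q)"
  unfolding theAlg_def by simp

context two_forests
begin

definition SS :: "nat \<Rightarrow> node set" where "SS f = (if f = 0 then S1 else S2)"
definition PP :: "nat \<Rightarrow> node \<Rightarrow> node" where "PP f = (if f = 0 then p1 else p2)"
definition dd :: "nat \<Rightarrow> node \<Rightarrow> nat" where "dd f = dep (SS f) (PP f)"
definition Aq :: "nat \<Rightarrow> nat \<Rightarrow> node \<Rightarrow> bool" where "Aq t f x = odd (dd f x div 2^t)"
definition pdir :: "nat \<Rightarrow> node \<Rightarrow> nat" where
  "pdir f w = (if w \<in> SS f then 0 else dir_of w (PP f w))"

lemma spf_f: "is_SPF X (SS f) (PP f)"
  unfolding SS_def PP_def using spf1 spf2 by simp

lemma sub_f: "SS f \<subseteq> X"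
  unfolding SS_def using sub1 sub2 by simp

definition goodcfg :: "nat \<Rightarrow> (node \<Rightarrow> nat) \<Rightarrow> bool" where
  "goodcfg t \<sigma> \<longleftrightarrow> (\<forall>w\<in>X. \<forall>f<2. rt f (from_nat (\<sigma> w)) = (w \<in> SS f) \<and>
      pdf f (from_nat (\<sigma> w)) = pdir f w \<and> actf f (from_nat (\<sigma> w)) = (2^t dvd dd f w))"

fun pv :: "nat \<Rightarrow> node \<times> nat \<times> nat \<Rightarrow> (nat \<times> bool) + unit" where
  "pv t (w, e, i) = (if i < 8 then Inl (i div 4, ((i mod 4) div 2 = 1) \<noteq> Aq t (i div 4) (if i mod 2 = cb e then w else nbr w e)) else Inr ())"

lemma key_par:
  assumes "w \<in> X" "w \<notin> SS f"
  shows "nbr w (pdir f w) = PP f w \<and> pdir f w < 6 \<and> PP f w \<in> X \<and>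
         Aq t f w = ((2^t dvd dd f w) \<noteq> Aq t f (PP f w))"
proof -
  have a: "PP f w \<in> X" "grid_adj w (PP f w)" using SPF_dep[OF spf_f assms] by auto
  have b: "dd f (PP f w) = dd f w - 1" "dd f w \<ge> 1"
    using dep_par[OF spf_f assms] dep_pos[OF spf_f assms] unfolding dd_def by auto
  show ?thesis using dir_of_ok[OF a(2)] a(1) assms(2) parity_step[OF b(2), of t] b(1)
    unfolding pdir_def Aq_def by simp
qed

lemma Aq_root: "w \<in> SS f \<Longrightarrow> Aq t f w = False"
  unfolding Aq_def dd_def by (simp add: dep_S)

lemma lab_small:
  assumes g: "goodcfg t \<sigma>" and w: "w \<in> X" "e < 6" "i < 9"
    and l: "lab (from_nat (\<sigma> w)) (e, i) \<le> 4"
  shows "\<exists>f L. f < 2 \<and> L < 2 \<and> lab (from_nat (\<sigma> w)) (e, i) = 1 + 2 * f + L \<and>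
     pv t (w, e, i) = Inl (f, (L = 1) \<noteq> Aq t f w)"
proof -
  let ?s = "from_nat (\<sigma> w)"
  have i8: "i < 8" using l w(3) by (cases "i = 8") auto
  obtain f where fd: "i div 4 = f" by blast
  obtain L where Ld: "(i mod 4) div 2 = L" by blast
  have f2: "f < 2" using fd i8 by auto
  have L2: "L < 2" using Ld by auto
  have gs: "rt f ?s = (w \<in> SS f)" "pdf f ?s = pdir f w" "actf f ?s = (2^t dvd dd f w)"
    using g w(1) f2 unfolding goodcfg_def by auto
  show ?thesis
  proof (cases "i mod 2 = cb e")
    case True
    then have "lab ?s (e, i) = 1 + 2 * f + L" using i8 fd Ld by simp
    moreover have "pv t (w, e, i) = Inl (f, (L = 1) \<noteq> Aq t f w)" using True i8 fd Ld by simp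
    ultimately show ?thesis using f2 L2 by blast
  next
    case False
    show ?thesis
    proof (cases "\<not> rt f ?s \<and> e = pdf f ?s")
      case True
      then have wn: "w \<notin> SS f" and ep: "e = pdir f w" using gs by auto
      define L' where "L' = (if actf f ?s then 1 - L else L)"
      have L'2: "L' < 2" unfolding L'_def using L2 by auto
      have "lab ?s (e, i) = 1 + 2 * f + L'" using i8 False True fd Ld
        unfolding L'_def by simp
      moreover have kp: "nbr w e = PP f w" "Aq t f w = ((2^t dvd dd f w) \<noteq> Aq t f (PP f w))"
        using key_par[OF w(1) wn, of t] ep by auto
      moreover have "pv t (w, e, i) = Inl (f, (L = 1) \<noteq> Aq t f (PP f w))"
        using False i8 fd Ld kp(1) by simp
      moreover have "((L = 1) \<noteq> Aq t f (PP f w)) = ((L' = 1) \<noteq> Aq t f w)"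
        using kp(2) gs(3) L2 unfolding L'_def by (cases L) auto
      ultimately show ?thesis using f2 L'2 by (intro exI[of _ f] exI[of _ L']) simp
    next
      case False2: False
      then have "lab ?s (e, i) = 10 + 10 * e + i" using i8 False fd by auto
      then show ?thesis using l by simp
    qed
  qed
qed

lemma lab_cases:
  assumes "i < 9"
  shows "lab s (e, i) \<le> 4 \<or> (lab s (e, i) = 5 \<and> i = 8) \<or> (lab s (e, i) = 10 + 10 * e + i \<and> i \<noteq> 8)"
proof (cases "i < 8")
  case True
  obtain f where fd: "i div 4 = f" by blast
  obtain L where Ld: "(i mod 4) div 2 = L" by blast
  have f2: "f < 2" using fd True by auto
  have L2: "L < 2" using Ld by auto
  have "1 + 2 * f + L \<le> 4" "1 + 2 * f + (1 - L) \<le> 4" using f2 L2 by auto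
  then show ?thesis using True fd Ld by auto
next
  case False then show ?thesis using assms by auto
qed

lemma step_pv:
  assumes g: "goodcfg t \<sigma>" and st: "pin_step theAlg X \<sigma> a b"
  shows "pv t a = pv t b"
proof -
  obtain w e i where a: "a = (w, e, i)" by (cases a) auto
  obtain w' e' i' where b: "b = (w', e', i')" by (cases b) auto
  have va: "w \<in> X" "e < 6" "nbr w e \<in> X" "i < 9" and vb: "w' \<in> X" "e' < 6" "nbr w' e' \<in> X" "i' < 9"
    using st unfolding pin_step_def valid_pin_alg a b by auto
  have "(w = w' \<and> lab (from_nat (\<sigma> w)) (e, i) = lab (from_nat (\<sigma> w)) (e', i')) \<or>
        (w' = nbr w e \<and> e' = opp e \<and> i' = i)"
    using st unfolding pin_step_def part_alg a b by auto
  then show ?thesis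
  proof
    assume h: "w = w' \<and> lab (from_nat (\<sigma> w)) (e, i) = lab (from_nat (\<sigma> w)) (e', i')"
    let ?l = "lab (from_nat (\<sigma> w)) (e, i)"
    consider "?l \<le> 4" | "?l = 5 \<and> i = 8" | "?l = 10 + 10 * e + i \<and> i \<noteq> 8"
      using lab_cases[OF va(4)] by blast
    then show ?thesis
    proof cases
      case 1
      obtain f L where fL: "f < 2" "L < 2" "?l = 1 + 2 * f + L" "pv t (w, e, i) = Inl (f, (L = 1) \<noteq> Aq t f w)"
        using lab_small[OF g va(1,2,4) 1] by blast
      have one': "lab (from_nat (\<sigma> w)) (e', i') \<le> 4" using 1 h by metis
      obtain f' L' where fL': "f' < 2" "L' < 2" "lab (from_nat (\<sigma> w)) (e', i') = 1 + 2 * f' + L'"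
          "pv t (w, e', i') = Inl (f', (L' = 1) \<noteq> Aq t f' w)"
        using lab_small[OF g va(1) vb(2,4) one'] by blast
      have "1 + 2 * f + L = 1 + 2 * f' + L'" using fL(3) fL'(3) h by metis
      then have "f = f' \<and> L = L'" using fL fL' by presburger
      then show ?thesis using fL(4) fL'(4) h a b by (simp del: lab.simps pv.simps)
    next
      case 2
      have l5: "lab (from_nat (\<sigma> w)) (e', i') = 5" using 2 h by metis
      have "i' = 8" using lab_cases[OF vb(4), of "from_nat (\<sigma> w)" e'] l5 by linarith
      then show ?thesis using 2 a b by simp
    next
      case 3
      have l5: "lab (from_nat (\<sigma> w)) (e', i') = 10 + 10 * e + i" using 3 h by metis
      have e: "10 * e + i = 10 * e' + i'" using lab_cases[OF vb(4), of "from_nat (\<sigma> w)" e'] l5 by linarith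
      have "(10 * e + i) mod 10 = i" "(10 * e' + i') mod 10 = i'" using va(4) vb(4) by auto
      then have "i = i'" using e by simp
      then have "e = e'" using e by simp
      then show ?thesis using a b h \<open>i = i'\<close> by simp
    qed
  next
    assume h: "w' = nbr w e \<and> e' = opp e \<and> i' = i"
    have co: "cb (opp e) = 1 - cb e" using cb_opp[OF va(2)] .
    have no: "nbr (nbr w e) (opp e) = w" using nbr_opp[OF va(2)] .
    have "cb e < 2" by (rule cb_le)
    then have ne: "cb (opp e) \<noteq> cb e" and c2: "i mod 2 \<noteq> cb e \<Longrightarrow> i mod 2 = cb (opp e)" using co by arith+
    show ?thesis
    proof (cases "i mod 2 = cb e")
      case True
      then have "i mod 2 \<noteq> cb (opp e)" using ne by simp
      then show ?thesis using a b h no True by simp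
    next
      case False
      then show ?thesis using a b h c2 by simp
    qed
  qed
qed

lemma rtr_pv:
  assumes g: "goodcfg t \<sigma>" and st: "(pin_step theAlg X \<sigma>)\<^sup>*\<^sup>* a b"
  shows "pv t a = pv t b"
  using st by induction (auto dest: step_pv[OF g])

lemma rtr_valid:
  assumes st: "(pin_step theAlg X \<sigma>)\<^sup>*\<^sup>* a b" and v: "valid_pin theAlg X (fst a) (snd a)"
  shows "valid_pin theAlg X (fst b) (snd b)"
  using st v by induction (auto simp: pin_step_def)

end


lemma enc_pin: "(f::nat) < 2 \<Longrightarrow> L < 2 \<Longrightarrow> b < 2 \<Longrightarrow>
  (4*f+2*L+b) div 4 = f \<and> ((4*f+2*L+b) mod 4) div 2 = L \<and> (4*f+2*L+b) mod 2 = b \<and> 4*f+2*L+b < 8"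
  by (cases f; cases L; cases b) (auto simp: less_Suc_eq)

lemma beeps_iff: "l \<in> beeps s \<longleftrightarrow> (l = 1 \<and> sr1 s) \<or> (l = 3 \<and> sr2 s) \<or>
      (l = 5 \<and> \<not> sdone s \<and> ((\<not> sr1 s \<and> sact1 s) \<or> (\<not> sr2 s \<and> sact2 s)))"
  unfolding beeps_def by simp

lemma rt_beep: "f < 2 \<Longrightarrow> rt f s \<Longrightarrow> 1 + 2 * f \<in> beeps s"
  unfolding beeps_def rt_def by (cases f) auto

lemma recvI: "valid_pin theAlg X u p \<Longrightarrow> lab (from_nat (\<sigma> u)) p = l \<Longrightarrow>
   (pin_step theAlg X \<sigma>)\<^sup>*\<^sup>* (u, p) (v, q) \<Longrightarrow> lab (from_nat (\<sigma> v)) q \<in> beeps (from_nat (\<sigma> v)) \<Longrightarrow>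
   l \<in> received theAlg X \<sigma> u"
  unfolding received_def part_alg beep_alg by blast

context two_forests
begin

lemma pin_same: "w \<in> X \<Longrightarrow> e < 6 \<Longrightarrow> nbr w e \<in> X \<Longrightarrow> i < 9 \<Longrightarrow> e' < 6 \<Longrightarrow> nbr w e' \<in> X \<Longrightarrow> i' < 9 \<Longrightarrow>
   lab (from_nat (\<sigma> w)) (e, i) = lab (from_nat (\<sigma> w)) (e', i') \<Longrightarrow> pin_step theAlg X \<sigma> (w, e, i) (w, e', i')"
  unfolding pin_step_def valid_pin_alg part_alg by simp

lemma pin_link: "w \<in> X \<Longrightarrow> e < 6 \<Longrightarrow> nbr w e \<in> X \<Longrightarrow> i < 9 \<Longrightarrow>
   pin_step theAlg X \<sigma> (w, e, i) (nbr w e, opp e, i)"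
  unfolding pin_step_def valid_pin_alg part_alg using nbr_opp opp_lt by simp

lemma chain_root:
  assumes g: "goodcfg t \<sigma>" and f: "f < 2"
  shows "u \<in> X \<Longrightarrow> u \<notin> SS f \<Longrightarrow> dd f u = n \<Longrightarrow> L < 2 \<Longrightarrow>
    \<exists>r e. r \<in> SS f \<and> r \<in> X \<and> e < 6 \<and> nbr r e \<in> X \<and>
      (pin_step theAlg X \<sigma>)\<^sup>*\<^sup>* (u, pdir f u, 4*f+2*L+cb (pdir f u))
          (r, e, 4*f + 2*(if Aq t f u then 1 - L else L) + cb e)"
proof (induction n arbitrary: u L)
  case 0
  then show ?case using dep_pos[OF spf_f, of u f] unfolding dd_def by simp
next
  case (Suc n)
  let ?s = "from_nat (\<sigma> u)"
  define pd where "pd = pdir f u"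
  define pu where "pu = PP f u"
  have kp: "nbr u pd = pu" "pd < 6" "pu \<in> X" "Aq t f u = ((2^t dvd dd f u) \<noteq> Aq t f pu)"
    using key_par[OF Suc.prems(1,2), of t] unfolding pd_def pu_def by auto
  have gs: "rt f ?s = False" "pdf f ?s = pd" "actf f ?s = (2^t dvd dd f u)"
    using g Suc.prems(1,2) f unfolding goodcfg_def pd_def by auto
  define L' where "L' = (if 2^t dvd dd f u then 1 - L else L)"
  have L'2: "L' < 2" unfolding L'_def using Suc.prems(4) by auto
  have cbl: "cb pd < 2" "1 - cb pd < 2" using cb_le[of pd] by auto
  define i1 where "i1 = 4*f+2*L+cb pd"
  define i2 where "i2 = 4*f+2*L'+(1 - cb pd)"
  have e1: "i1 div 4 = f" "(i1 mod 4) div 2 = L" "i1 mod 2 = cb pd" "i1 < 8"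
    using enc_pin[OF f Suc.prems(4) cbl(1)] unfolding i1_def by auto
  have e2: "i2 div 4 = f" "(i2 mod 4) div 2 = L'" "i2 mod 2 = 1 - cb pd" "i2 < 8"
    using enc_pin[OF f L'2 cbl(2)] unfolding i2_def by auto
  have ne: "1 - cb pd \<noteq> cb pd" using cbl by arith
  have lab1: "lab ?s (pd, i1) = 1 + 2*f + L" using e1 by simp
  have lab2: "lab ?s (pd, i2) = 1 + 2*f + L" using e2 ne gs Suc.prems(4) unfolding L'_def by auto
  have st1: "pin_step theAlg X \<sigma> (u, pd, i1) (u, pd, i2)"
    by (rule pin_same) (use Suc.prems(1) kp e1 e2 lab1 lab2 in auto)
  have st2: "pin_step theAlg X \<sigma> (u, pd, i2) (pu, opp pd, i2)"
    using pin_link[OF Suc.prems(1) kp(2) _ , of i2 \<sigma>] kp e2 Suc.prems(1) by simp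
  have cbo: "cb (opp pd) = 1 - cb pd" using cb_opp[OF kp(2)] .
  have nbo: "nbr pu (opp pd) = u" using nbr_opp[OF kp(2), of u] kp(1) by simp
  show ?case
  proof (cases "pu \<in> SS f")
    case True
    have "Aq t f pu = False" using Aq_root[OF True] .
    then have "i2 = 4*f + 2*(if Aq t f u then 1 - L else L) + cb (opp pd)"
      using kp(4) cbo unfolding i2_def L'_def by simp
    then show ?thesis
      apply (intro exI[of _ pu] exI[of _ "opp pd"])
      using True kp(3) opp_lt nbo Suc.prems(1) st1 st2 unfolding pd_def[symmetric] i1_def[symmetric]
      by auto
  next
    case False
    have dpu: "dd f pu = n" using dep_par[OF spf_f Suc.prems(1,2)] Suc.prems(3) unfolding dd_def pu_def by simp
    define pd2 where "pd2 = pdir f pu"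
    have kp2: "nbr pu pd2 \<in> X" "pd2 < 6" using key_par[OF kp(3) False, of t] unfolding pd2_def by auto
    define i3 where "i3 = 4*f+2*L'+cb pd2"
    have e3: "i3 div 4 = f" "(i3 mod 4) div 2 = L'" "i3 mod 2 = cb pd2" "i3 < 8"
      using enc_pin[OF f L'2 cb_le] unfolding i3_def by auto
    have lab3: "lab (from_nat (\<sigma> pu)) (opp pd, i2) = 1 + 2*f + L'" using e2 cbo by simp
    have lab4: "lab (from_nat (\<sigma> pu)) (pd2, i3) = 1 + 2*f + L'" using e3 by simp
    have st3: "pin_step theAlg X \<sigma> (pu, opp pd, i2) (pu, pd2, i3)"
      by (rule pin_same) (use kp(3) kp2 e2 e3 lab3 lab4 opp_lt nbo Suc.prems(1) in auto)
    obtain r e where re: "r \<in> SS f" "r \<in> X" "e < 6" "nbr r e \<in> X"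
      "(pin_step theAlg X \<sigma>)\<^sup>*\<^sup>* (pu, pd2, i3) (r, e, 4*f + 2*(if Aq t f pu then 1 - L' else L') + cb e)"
      using Suc.IH[OF kp(3) False dpu L'2] unfolding pd2_def i3_def by blast
    have eqL: "(if Aq t f pu then 1 - L' else L') = (if Aq t f u then 1 - L else L)"
      using kp(4) Suc.prems(4) unfolding L'_def by (cases L) auto
    have "(pin_step theAlg X \<sigma>)\<^sup>*\<^sup>* (u, pd, i1) (r, e, 4*f + 2*(if Aq t f u then 1 - L else L) + cb e)"
    proof -
      have "(pin_step theAlg X \<sigma>)\<^sup>*\<^sup>* (pu, pd2, i3) (r, e, 4*f + 2*(if Aq t f u then 1 - L else L) + cb e)"
        using re(5) eqL by simp
      then have "(pin_step theAlg X \<sigma>)\<^sup>*\<^sup>* (pu, opp pd, i2) (r, e, 4*f + 2*(if Aq t f u then 1 - L else L) + cb e)"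
        by (rule converse_rtranclp_into_rtranclp[of "pin_step theAlg X \<sigma>", OF st3])
      then have "(pin_step theAlg X \<sigma>)\<^sup>*\<^sup>* (u, pd, i2) (r, e, 4*f + 2*(if Aq t f u then 1 - L else L) + cb e)"
        by (rule converse_rtranclp_into_rtranclp[of "pin_step theAlg X \<sigma>", OF st2])
      then show ?thesis
        by (rule converse_rtranclp_into_rtranclp[of "pin_step theAlg X \<sigma>", OF st1])
    qed
    then show ?thesis using re(1-4) unfolding pd_def i1_def by blast
  qed
qed

lemma recv_tree:
  assumes g: "goodcfg t \<sigma>" and f: "f < 2" and u: "u \<in> X" "u \<notin> SS f"
  shows "(1 + 2*f \<in> received theAlg X \<sigma> u) \<longleftrightarrow> \<not> Aq t f u"
proof
  assume "1 + 2*f \<in> received theAlg X \<sigma> u"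
  then obtain e i v q where p: "valid_pin theAlg X u (e, i)" "lab (from_nat (\<sigma> u)) (e, i) = 1 + 2*f"
    "(pin_step theAlg X \<sigma>)\<^sup>*\<^sup>* (u, e, i) (v, q)" "lab (from_nat (\<sigma> v)) q \<in> beeps (from_nat (\<sigma> v))"
    unfolding received_def part_alg beep_alg by auto
  have pvu: "pv t (u, e, i) = Inl (f, Aq t f u)"
  proof -
    obtain f' L where fL: "f' < 2" "L < 2" "lab (from_nat (\<sigma> u)) (e, i) = 1 + 2 * f' + L"
       "pv t (u, e, i) = Inl (f', (L = 1) \<noteq> Aq t f' u)"
      using lab_small[OF g, of u e i] p(1,2) f unfolding valid_pin_alg by auto
    have "f' = f \<and> L = 0" using fL(1-3) p(2) by presburger
    then show ?thesis using fL(4) by simp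
  qed
  obtain e2 i2 where q: "q = (e2, i2)" by (cases q) auto
  have vq: "v \<in> X" "e2 < 6" "nbr v e2 \<in> X" "i2 < 9"
    using rtr_valid[OF p(3)] p(1) q unfolding valid_pin_alg by auto
  have pvv: "pv t (v, e2, i2) = Inl (f, Aq t f u)" using rtr_pv[OF g p(3)] pvu q by simp
  let ?l = "lab (from_nat (\<sigma> v)) (e2, i2)"
  have lb: "?l \<in> beeps (from_nat (\<sigma> v))" using p(4) q by simp
  consider "?l \<le> 4" | "?l = 5 \<and> i2 = 8" | "?l = 10 + 10 * e2 + i2 \<and> i2 \<noteq> 8"
    using lab_cases[OF vq(4)] by blast
  then show "\<not> Aq t f u"
  proof cases
    case 1
    obtain f' L where fL: "f' < 2" "L < 2" "?l = 1 + 2 * f' + L"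
       "pv t (v, e2, i2) = Inl (f', (L = 1) \<noteq> Aq t f' v)"
      using lab_small[OF g vq(1,2,4) 1] by blast
    have "(?l = 1 \<and> sr1 (from_nat (\<sigma> v))) \<or> (?l = 3 \<and> sr2 (from_nat (\<sigma> v)))"
      using lb 1 unfolding beeps_iff by auto
    then have "L = 0 \<and> rt f' (from_nat (\<sigma> v))" using fL(1-3) unfolding rt_def by auto
    then have "L = 0 \<and> v \<in> SS f'" using g vq(1) fL(1) unfolding goodcfg_def by auto
    then show ?thesis using fL(4) pvv Aq_root by auto
  next
    case 2 then show ?thesis using pvv by simp
  next
    case 3 then show ?thesis using lb unfolding beeps_iff by auto
  qed
next
  assume nA: "\<not> Aq t f u"
  obtain r e where re: "r \<in> SS f" "r \<in> X" "e < 6" "nbr r e \<in> X"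
      "(pin_step theAlg X \<sigma>)\<^sup>*\<^sup>* (u, pdir f u, 4*f+2*0+cb (pdir f u))
          (r, e, 4*f + 2*(if Aq t f u then 1 - 0 else 0) + cb e)"
    using chain_root[OF g f u, of "dd f u" 0] by auto
  have kp: "nbr u (pdir f u) \<in> X" "pdir f u < 6" using key_par[OF u, of t] by auto
  have e1: "(4*f+2*0+cb (pdir f u)) div 4 = f" "((4*f+2*0+cb (pdir f u)) mod 4) div 2 = 0"
     "(4*f+2*0+cb (pdir f u)) mod 2 = cb (pdir f u)" "4*f+2*0+cb (pdir f u) < 8"
    using enc_pin[OF f _ cb_le, of 0] by auto
  have e2: "(4*f+2*0+cb e) div 4 = f" "((4*f+2*0+cb e) mod 4) div 2 = 0"
     "(4*f+2*0+cb e) mod 2 = cb e" "4*f+2*0+cb e < 8"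
    using enc_pin[OF f _ cb_le, of 0] by auto
  have l1: "lab (from_nat (\<sigma> u)) (pdir f u, 4*f+2*0+cb (pdir f u)) = 1 + 2*f" using e1 by simp
  have l2: "lab (from_nat (\<sigma> r)) (e, 4*f+2*0+cb e) = 1 + 2*f" using e2 by simp
  have rr: "rt f (from_nat (\<sigma> r))" using g re(1,2) f unfolding goodcfg_def by auto
  have bb: "1 + 2*f \<in> beeps (from_nat (\<sigma> r))" using rt_beep[OF f rr] .
  show "1 + 2*f \<in> received theAlg X \<sigma> u"
    apply (rule recvI[where p="(pdir f u, 4*f+2*0+cb (pdir f u))" and v=r and q="(e, 4*f+2*0+cb e)"])
    using u(1) kp e1(4) l1 l2 re(5) nA bb unfolding valid_pin_alg by auto
qed

end


lemma dvd_step: "((2::nat)^t dvd d \<and> even (d div 2^t)) \<longleftrightarrow> 2^(Suc t) dvd d"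
proof
  assume h: "2^t dvd d \<and> even (d div 2^t)"
  then obtain k where k: "d = 2^t * k" by blast
  then have "d div 2^t = k" by simp
  then obtain m where "k = 2 * m" using h by blast
  then show "2^(Suc t) dvd d" using k by (simp add: mult.assoc)
next
  assume "2^(Suc t) dvd d"
  then obtain m where m: "d = 2^(Suc t) * m" by blast
  then have "d = 2^t * (2 * m)" by (simp add: mult.assoc)
  then show "2^t dvd d \<and> even (d div 2^t)" by simp
qed

lemma mod_step: "(x::nat) mod 2^(Suc t) = x mod 2^t + 2^t * ((x div 2^t) mod 2)"
proof -
  have "x mod (2^t * 2) = 2^t * (x div 2^t mod 2) + x mod 2^t" by (rule mod_mult2_eq)
  then show ?thesis by (simp add: mult.commute)
qed

lemma le_step: "((x::nat) mod 2^(Suc t) \<le> y mod 2^(Suc t)) =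
   (if odd (x div 2^t) = odd (y div 2^t) then x mod 2^t \<le> y mod 2^t else odd (y div 2^t))"
proof -
  have a: "x mod 2^t < 2^t" "y mod 2^t < 2^t" by simp_all
  have b: "(x div 2^t) mod 2 = (if odd (x div 2^t) then 1 else 0)" "(y div 2^t) mod 2 = (if odd (y div 2^t) then 1 else 0)"
    by (simp_all add: odd_iff_mod_2_eq_one)
  show ?thesis unfolding mod_step b by (auto; use a in linarith)
qed


lemma lab8: "lab s (e, 8) = 5" by simp

context two_forests
begin

lemma glob_walk:
  "walk_in X xs \<Longrightarrow> 2 \<le> length xs \<Longrightarrow> \<exists>e e'. e < 6 \<and> nbr (hd xs) e \<in> X \<and> e' < 6 \<and> nbr (last xs) e' \<in> X \<and>
     (pin_step theAlg X \<sigma>)\<^sup>*\<^sup>* (hd xs, e, 8) (last xs, e', 8)"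
proof (induction xs)
  case Nil then show ?case by simp
next
  case (Cons x xs)
  then obtain y ys where xs: "xs = y # ys" by (cases xs) auto
  have w: "x \<in> X" "grid_adj x y" "walk_in X (y # ys)" using walk_Cons2 Cons.prems(1) xs by auto
  then obtain d where d: "d < 6" "y = nbr x d" unfolding grid_adj_def by blast
  have yX: "y \<in> X" using w(3) unfolding walk_in_def by simp
  have st: "pin_step theAlg X \<sigma> (x, d, 8) (y, opp d, 8)" using pin_link[OF w(1) d(1), of 8 \<sigma>] d yX by simp
  have bk: "nbr y (opp d) = x" using nbr_opp[OF d(1)] d(2) by simp
  show ?case
  proof (cases ys)
    case Nil
    then show ?thesis using st d yX bk w(1) opp_lt xs
      by (intro exI[of _ d] exI[of _ "opp d"]) auto
  next
    case (Cons z zs)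
    then obtain e1 e1' where IH: "e1 < 6" "nbr y e1 \<in> X" "e1' < 6" "nbr (last xs) e1' \<in> X"
       "(pin_step theAlg X \<sigma>)\<^sup>*\<^sup>* (y, e1, 8) (last xs, e1', 8)"
      using Cons.IH w(3) xs by auto
    have st2: "pin_step theAlg X \<sigma> (y, opp d, 8) (y, e1, 8)"
      by (rule pin_same) (use yX opp_lt bk w(1) IH in auto)
    have "(pin_step theAlg X \<sigma>)\<^sup>*\<^sup>* (x, d, 8) (last xs, e1', 8)"
      using converse_rtranclp_into_rtranclp[of "pin_step theAlg X \<sigma>", OF st,
            OF converse_rtranclp_into_rtranclp[of "pin_step theAlg X \<sigma>", OF st2 IH(5)]] .
    then show ?thesis using d yX IH xs w(1)
      by (intro exI[of _ d] exI[of _ e1']) auto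
  qed
qed

lemma recv_glob:
  assumes g: "goodcfg t \<sigma>" and u: "u \<in> X"
  shows "(5 \<in> received theAlg X \<sigma> u) \<longleftrightarrow> (\<exists>v\<in>X. 5 \<in> beeps (from_nat (\<sigma> v)))"
proof
  assume "5 \<in> received theAlg X \<sigma> u"
  then obtain e i v q where p: "valid_pin theAlg X u (e, i)" "lab (from_nat (\<sigma> u)) (e, i) = 5"
    "(pin_step theAlg X \<sigma>)\<^sup>*\<^sup>* (u, e, i) (v, q)" "lab (from_nat (\<sigma> v)) q \<in> beeps (from_nat (\<sigma> v))"
    unfolding received_def part_alg beep_alg by auto
  have i9: "i < 9" using p(1) unfolding valid_pin_alg by simp
  have i8: "i = 8" using lab_cases[OF i9, of "from_nat (\<sigma> u)" e] p(2) by auto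
  obtain e2 i2 where q: "q = (e2, i2)" by (cases q) auto
  have vq: "v \<in> X" "i2 < 9"
    using rtr_valid[OF p(3)] p(1) q unfolding valid_pin_alg by auto
  have "pv t (v, e2, i2) = Inr ()" using rtr_pv[OF g p(3)] i8 q by simp
  then have "i2 = 8" using vq(2) by (cases "i2 < 8") auto
  then show "\<exists>v\<in>X. 5 \<in> beeps (from_nat (\<sigma> v))" using p(4) q vq(1) by auto
next
  assume "\<exists>v\<in>X. 5 \<in> beeps (from_nat (\<sigma> v))"
  then obtain v where v: "v \<in> X" "5 \<in> beeps (from_nat (\<sigma> v))" by blast
  then have "\<not> sr1 (from_nat (\<sigma> v)) \<or> \<not> sr2 (from_nat (\<sigma> v))" unfolding beeps_iff by auto
  then obtain f where f: "f < 2" "\<not> rt f (from_nat (\<sigma> v))"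
  proof (cases "sr1 (from_nat (\<sigma> v))")
    case True
    assume r: "\<And>f. f < 2 \<Longrightarrow> \<not> rt f (from_nat (\<sigma> v)) \<Longrightarrow> thesis"
      and "\<not> sr1 (from_nat (\<sigma> v)) \<or> \<not> sr2 (from_nat (\<sigma> v))"
    then show ?thesis using r[of 1] True unfolding rt_def by auto
  next
    case False
    assume r: "\<And>f. f < 2 \<Longrightarrow> \<not> rt f (from_nat (\<sigma> v)) \<Longrightarrow> thesis"
    then show ?thesis using r[of 0] False unfolding rt_def by auto
  qed
  then have vS: "v \<notin> SS f" using g v(1) unfolding goodcfg_def by auto
  have kp: "nbr v (pdir f v) \<in> X" "pdir f v < 6" using key_par[OF v(1) vS, of t] by auto
  show "5 \<in> received theAlg X \<sigma> u"
  proof (cases "u = v")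
    case True
    show ?thesis
      apply (rule recvI[where p="(pdir f v, 8)" and v=v and q="(pdir f v, 8)"])
      using True kp v unfolding valid_pin_alg by auto
  next
    case False
    obtain xs where xs: "walk_in X xs" "hd xs = u" "last xs = v" using conn u v(1) unfolding connected_in_def by blast
    have "length xs \<noteq> 1" using xs False by (cases xs) auto
    moreover have "xs \<noteq> []" using xs(1) unfolding walk_in_def by simp
    ultimately have "2 \<le> length xs" by (cases "length xs") auto
    then obtain e e' where ee: "e < 6" "nbr u e \<in> X" "e' < 6" "nbr v e' \<in> X"
      "(pin_step theAlg X \<sigma>)\<^sup>*\<^sup>* (u, e, 8) (v, e', 8)" using glob_walk[OF xs(1) \<open>2 \<le> length xs\<close>, of \<sigma>] unfolding xs(2,3) by blast
    show ?thesis
      apply (rule recvI[where p="(e, 8)" and v=v and q="(e', 8)"])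
      using ee u v unfolding valid_pin_alg by auto
  qed
qed

end


lemma run_Suc_alg: "run theAlg X inp (Suc t) w =
   to_nat (step (from_nat (run theAlg X inp t w)) (received theAlg X (run theAlg X inp t) w))"
  by (simp add: theAlg_def)

lemma run_0_alg: "run theAlg X inp 0 w = to_nat (initst (inp w))"
  by (simp add: theAlg_def)

context two_forests
begin

definition mk :: "nat \<Rightarrow> bool \<Rightarrow> node \<Rightarrow> st" where
  "mk t dn w = St (w \<in> S1) (w \<in> S2) (pdir 0 w) (pdir 1 w) (2^t dvd dd 0 w) (2^t dvd dd 1 w)
      (dd 0 w mod 2^t \<le> dd 1 w mod 2^t) dn"

definition active :: "nat \<Rightarrow> bool" where
  "active t \<longleftrightarrow> (\<exists>v\<in>X. (v \<notin> S1 \<and> 2^t dvd dd 0 v) \<or> (v \<notin> S2 \<and> 2^t dvd dd 1 v))"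

lemma SS01: "SS 0 = S1" "SS 1 = S2" unfolding SS_def by auto

lemma goodcfg_mk: "(\<And>w. w \<in> X \<Longrightarrow> from_nat (\<sigma> w) = mk t dn w) \<Longrightarrow> goodcfg t \<sigma>"
  unfolding goodcfg_def
proof (intro ballI allI impI)
  fix w f assume h: "\<And>w. w \<in> X \<Longrightarrow> from_nat (\<sigma> w) = mk t dn w" and w: "w \<in> X" and f: "f < (2::nat)"
  then have "f = 0 \<or> f = 1" by auto
  then show "rt f (from_nat (\<sigma> w)) = (w \<in> SS f) \<and> pdf f (from_nat (\<sigma> w)) = pdir f w \<and>
         actf f (from_nat (\<sigma> w)) = (2 ^ t dvd dd f w)"
    using h[OF w] unfolding mk_def rt_def pdf_def actf_def SS_def by auto
qed

lemma bit_lemma: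
  assumes g: "goodcfg t \<sigma>" and w: "w \<in> X" and f: "f < 2"
  shows "(w \<notin> SS f \<and> 1 + 2*f \<notin> received theAlg X \<sigma> w) = odd (dd f w div 2^t)"
proof (cases "w \<in> SS f")
  case True
  then show ?thesis unfolding dd_def by (simp add: dep_S)
next
  case False
  then show ?thesis using recv_tree[OF g f w False] unfolding Aq_def by simp
qed

lemma step_active:
  assumes h: "\<And>w. w \<in> X \<Longrightarrow> from_nat (\<sigma> w) = mk t False w" and a: "active t" and w: "w \<in> X"
  shows "step (mk t False w) (received theAlg X \<sigma> w) = mk (Suc t) False w"
proof -
  have g: "goodcfg t \<sigma>" using goodcfg_mk[OF h] .
  let ?R = "received theAlg X \<sigma> w"
  have five: "5 \<in> ?R"
  proof -
    obtain v where v: "v \<in> X" "(v \<notin> S1 \<and> 2^t dvd dd 0 v) \<or> (v \<notin> S2 \<and> 2^t dvd dd 1 v)"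
      using a unfolding active_def by blast
    have "5 \<in> beeps (from_nat (\<sigma> v))" using h[OF v(1)] v(2) unfolding beeps_iff mk_def by auto
    then show ?thesis using recv_glob[OF g w] v(1) by blast
  qed
  have b1: "(w \<notin> S1 \<and> 1 \<notin> ?R) = odd (dd 0 w div 2^t)" using bit_lemma[OF g w, of 0] SS01 by simp
  have o2: "(1::nat) < 2" by simp
  have e3: "(1::nat) + 2 * 1 = 3" by simp
  have b2: "(w \<notin> S2 \<and> 3 \<notin> ?R) = odd (dd 1 w div 2^t)"
    using bit_lemma[OF g w o2] unfolding e3 SS01(2) .
  have d1: "(2^t dvd dd 0 w \<and> \<not> odd (dd 0 w div 2^t)) = (2^(Suc t) dvd dd 0 w)" using dvd_step by simp
  have d2: "(2^t dvd dd 1 w \<and> \<not> odd (dd 1 w div 2^t)) = (2^(Suc t) dvd dd 1 w)" using dvd_step by simp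
  show ?thesis
    unfolding step_def mk_def using five b1 b2 d1 d2 le_step[of "dd 0 w" t "dd 1 w"]
    by (simp add: Let_def)
qed

lemma step_done:
  assumes h: "\<And>w. w \<in> X \<Longrightarrow> from_nat (\<sigma> w) = mk t False w" and a: "\<not> active t" and w: "w \<in> X"
  shows "step (mk t False w) (received theAlg X \<sigma> w) = mk t True w"
proof -
  have g: "goodcfg t \<sigma>" using goodcfg_mk[OF h] .
  have "5 \<notin> received theAlg X \<sigma> w"
  proof
    assume "5 \<in> received theAlg X \<sigma> w"
    then obtain v where v: "v \<in> X" "5 \<in> beeps (from_nat (\<sigma> v))" using recv_glob[OF g w] by blast
    then show False using h[OF v(1)] a unfolding beeps_iff mk_def active_def by auto
  qed
  then show ?thesis unfolding step_def mk_def by simp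
qed

lemma step_frozen: "step (mk t True w) R = mk t True w"
  unfolding step_def mk_def by simp

lemma dd_bound:
  assumes a: "\<not> active T" and w: "w \<in> X" and f: "f < 2"
  shows "dd f w < 2^T"
proof (rule ccontr)
  assume "\<not> dd f w < 2^T"
  then have ge: "2^T \<le> dd f w" by simp
  let ?x = "(PP f ^^ (dd f w - 2^T)) w"
  have x: "?x \<in> X" "dd f ?x = 2^T"
    using dep_iter[OF spf_f w, of "dd f w - 2^T" f] ge unfolding dd_def by auto
  have "?x \<notin> SS f"
  proof
    assume "?x \<in> SS f"
    then have "dd f ?x = 0" unfolding dd_def by (simp add: dep_S)
    then show False using x(2) by simp
  qed
  then have "active T" unfolding active_def using x f SS01 by (cases f) (auto intro!: bexI[of _ ?x])
  then show False using a by simp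
qed

lemma dd_lt_card: "w \<in> X \<Longrightarrow> dd f w < card X"
  unfolding dd_def using dep_lt_card[OF spf_f _ fin] by blast

lemma not_active_card: "\<not> active (card X)"
proof
  assume "active (card X)"
  then obtain v f where v: "v \<in> X" "f < 2" "v \<notin> SS f" "2^(card X) dvd dd f v"
  proof -
    assume r: "\<And>v f. v \<in> X \<Longrightarrow> f < 2 \<Longrightarrow> v \<notin> SS f \<Longrightarrow> 2^(card X) dvd dd f v \<Longrightarrow> thesis"
    obtain v where v: "v \<in> X" "(v \<notin> S1 \<and> 2^(card X) dvd dd 0 v) \<or> (v \<notin> S2 \<and> 2^(card X) dvd dd 1 v)"
      using \<open>active (card X)\<close> unfolding active_def by blast
    then show thesis using r[of v 0] r[of v 1] SS01 by auto
  qed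
  have "dd f v \<ge> 1" using dep_pos[OF spf_f v(1) v(3)] unfolding dd_def by simp
  then have "2^(card X) \<le> dd f v" using v(4) by (simp add: dvd_imp_le)
  moreover have "card X < 2^(card X)" by (rule less_exp)
  ultimately show False using dd_lt_card[OF v(1), of f] by simp
qed


abbreviation "Inp ldr \<equiv> local_input X S1 S2 p1 p2 ldr"

lemma run_init: "w \<in> X \<Longrightarrow> from_nat (run theAlg X (Inp ldr) 0 w) = mk 0 False w"
proof -
  assume w: "w \<in> X"
  have c1: "clampd (if w \<in> S1 then None else Some (dir_of w (p1 w))) = pdir 0 w"
  proof (cases "w \<in> S1")
    case True then show ?thesis unfolding clampd_def pdir_def SS_def by simp
  next
    case False
    then have "pdir 0 w < 6" using key_par[OF w, of 0 0] SS01 by simp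
    then show ?thesis using False unfolding clampd_def pdir_def SS_def PP_def by simp
  qed
  have c2: "clampd (if w \<in> S2 then None else Some (dir_of w (p2 w))) = pdir 1 w"
  proof (cases "w \<in> S2")
    case True then show ?thesis unfolding clampd_def pdir_def SS_def by simp
  next
    case False
    then have "pdir 1 w < 6" using key_par[OF w, of 1 0] SS01 by simp
    then show ?thesis using False unfolding clampd_def pdir_def SS_def PP_def by simp
  qed
  show ?thesis unfolding run_0_alg local_input_def mk_def using c1 c2 by simp
qed

definition I0 :: nat where "I0 = (LEAST t. \<not> active t)"

lemma I0_prop: "\<not> active I0" unfolding I0_def using not_active_card by (rule LeastI)

lemma inv1: "t \<le> I0 \<Longrightarrow> \<forall>w\<in>X. from_nat (run theAlg X (Inp ldr) t w) = mk t False w"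
proof (induction t)
  case 0 then show ?case using run_init by blast
next
  case (Suc t)
  then have IH: "\<And>w. w \<in> X \<Longrightarrow> from_nat (run theAlg X (Inp ldr) t w) = mk t False w" by auto
  have a: "active t" using Suc.prems not_less_Least[of t "\<lambda>t. \<not> active t"] unfolding I0_def by auto
  show ?case
  proof
    fix w assume w: "w \<in> X"
    show "from_nat (run theAlg X (Inp ldr) (Suc t) w) = mk (Suc t) False w"
      unfolding run_Suc_alg using IH[OF w] step_active[OF IH a w] by simp
  qed
qed

lemma inv2: "\<forall>w\<in>X. from_nat (run theAlg X (Inp ldr) (Suc I0 + k) w) = mk I0 True w"
proof (induction k)
  case 0
  have IH: "\<And>w. w \<in> X \<Longrightarrow> from_nat (run theAlg X (Inp ldr) I0 w) = mk I0 False w" using inv1 by auto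
  show ?case
  proof
    fix w assume w: "w \<in> X"
    show "from_nat (run theAlg X (Inp ldr) (Suc I0 + 0) w) = mk I0 True w"
      unfolding add_0_right run_Suc_alg using IH[OF w] step_done[OF IH I0_prop w] by simp
  qed
next
  case (Suc k)
  show ?case
  proof
    fix w assume w: "w \<in> X"
    have "Suc I0 + Suc k = Suc (Suc I0 + k)" by simp
    then show "from_nat (run theAlg X (Inp ldr) (Suc I0 + Suc k) w) = mk I0 True w"
      using Suc.IH w step_frozen by (simp only: run_Suc_alg) simp
  qed
qed

lemma I0_bound:
  assumes ne: "X \<noteq> {}"
  shows "real (Suc I0) \<le> 2 * (1 + log 2 (real (card X)))"
proof -
  have cpos: "card X \<ge> 1" using ne fin by (simp add: Suc_le_eq card_gt_0_iff)
  have lg: "0 \<le> log 2 (real (card X))" using cpos by simp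
  show ?thesis
  proof (cases I0)
    case 0 then show ?thesis using lg by simp
  next
    case (Suc j)
    then have "active j" using not_less_Least[of j "\<lambda>t. \<not> active t"] unfolding I0_def by auto
    then obtain v f where v: "v \<in> X" "f < 2" "v \<notin> SS f" "2^j dvd dd f v"
    proof -
      assume r: "\<And>v f. v \<in> X \<Longrightarrow> f < 2 \<Longrightarrow> v \<notin> SS f \<Longrightarrow> 2^j dvd dd f v \<Longrightarrow> thesis"
      obtain v where v: "v \<in> X" "(v \<notin> S1 \<and> 2^j dvd dd 0 v) \<or> (v \<notin> S2 \<and> 2^j dvd dd 1 v)"
        using \<open>active j\<close> unfolding active_def by blast
      then show thesis using r[of v 0] r[of v 1] SS01 by auto
    qed
    have "dd f v \<ge> 1" using dep_pos[OF spf_f v(1) v(3)] unfolding dd_def by simp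
    then have "2^j \<le> dd f v" using v(4) by (simp add: dvd_imp_le)
    then have "2^j \<le> card X" using dd_lt_card[OF v(1), of f] by simp
    then have "(2::real)^j \<le> real (card X)" by (metis of_nat_le_iff of_nat_numeral of_nat_power)
    then have "real j \<le> log 2 (real (card X))" by (rule le_log_of_power) simp
    then show ?thesis using Suc lg by simp
  qed
qed

lemma main_loc:
  assumes ne: "X \<noteq> {}"
  shows "\<exists>T::nat. real T \<le> 2 * (1 + log 2 (real (card X))) \<and>
          (\<forall>t\<ge>T. (\<forall>u\<in>X. final theAlg (run theAlg X (Inp ldr) t u)) \<and>
                  is_SPF X (S1 \<union> S2) (\<lambda>u. nbr u (outdir theAlg (run theAlg X (Inp ldr) t u))))"
proof (intro exI[of _ "Suc I0"] conjI allI impI)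
  show "real (Suc I0) \<le> 2 * (1 + log 2 (real (card X)))" using I0_bound[OF ne] .
  fix t assume t: "Suc I0 \<le> t"
  then obtain k where k: "t = Suc I0 + k" using le_Suc_ex by blast
  have st: "\<And>w. w \<in> X \<Longrightarrow> from_nat (run theAlg X (Inp ldr) t w) = mk I0 True w" using inv2 k by auto
  show "\<forall>u\<in>X. final theAlg (run theAlg X (Inp ldr) t u)"
    using st unfolding theAlg_def mk_def by simp
  show "is_SPF X (S1 \<union> S2) (\<lambda>u. nbr u (outdir theAlg (run theAlg X (Inp ldr) t u)))"
  proof (rule SPF_cong[OF merged_SPF])
    fix u assume u: "u \<in> X" "u \<notin> S1 \<union> S2"
    have b0: "dd 0 u < 2^I0" "dd 1 u < 2^I0" using dd_bound[OF I0_prop u(1)] by auto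
    have le: "(dd 0 u mod 2^I0 \<le> dd 1 u mod 2^I0) = (dd 0 u \<le> dd 1 u)" using b0 by simp
    have k0: "nbr u (pdir 0 u) = p1 u" using key_par[OF u(1), of 0 0] u(2) SS01 unfolding PP_def by simp
    have k1: "nbr u (pdir 1 u) = p2 u" using key_par[OF u(1), of 1 0] u(2) SS01 unfolding PP_def by simp
    have dd01: "dd 0 = dep S1 p1" "dd 1 = dep S2 p2" unfolding dd_def SS_def PP_def by auto
    show "nbr u (outdir theAlg (run theAlg X (Inp ldr) t u)) = mpar S1 p1 S2 p2 u"
      using st[OF u(1)] le k0 k1 unfolding theAlg_def mk_def mpar_def dd01 by simp
  qed
qed

end

theorem mainTheorem11:
  shows "\<exists>(A::alg) (C::real). valid_alg A \<and>
    (\<forall>X S1 S2 p1 p2 ldr.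
       amoebot_structure X \<and> no_holes X \<and> ldr \<in> X \<and>
       S1 \<subseteq> X \<and> S2 \<subseteq> X \<and> S1 \<noteq> {} \<and> S2 \<noteq> {} \<and>
       is_SPF X S1 p1 \<and> is_SPF X S2 p2 \<longrightarrow>
       (\<exists>T::nat. real T \<le> C * (1 + log 2 (real (card X))) \<and>
          (\<forall>t\<ge>T. (\<forall>u\<in>X. final A (run A X (local_input X S1 S2 p1 p2 ldr) t u)) \<and>
                  is_SPF X (S1 \<union> S2)
                    (\<lambda>u. nbr u (outdir A (run A X (local_input X S1 S2 p1 p2 ldr) t u))))))"
proof (intro exI[of _ theAlg] exI[of _ "2::real"] conjI allI impI)
  show "valid_alg theAlg" by (rule valid_theAlg)
  fix X S1 S2 p1 p2 ldr
  assume h: "amoebot_structure X \<and> no_holes X \<and> ldr \<in> X \<and>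
       S1 \<subseteq> X \<and> S2 \<subseteq> X \<and> S1 \<noteq> {} \<and> S2 \<noteq> {} \<and> is_SPF X S1 p1 \<and> is_SPF X S2 p2"
  then interpret two_forests X S1 S2 p1 p2
    by unfold_locales (auto simp: amoebot_structure_def)
  show "\<exists>T::nat. real T \<le> 2 * (1 + log 2 (real (card X))) \<and>
          (\<forall>t\<ge>T. (\<forall>u\<in>X. final theAlg (run theAlg X (local_input X S1 S2 p1 p2 ldr) t u)) \<and>
                  is_SPF X (S1 \<union> S2)
                    (\<lambda>u. nbr u (outdir theAlg (run theAlg X (local_input X S1 S2 p1 p2 ldr) t u))))"
    using main_loc h unfolding amoebot_structure_def by blast
qed


end
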